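(* Let $\alpha: I\to M$ be a unit-speed curve on an oriented surface $M\subset E^3$ with Darboux frame $\{T,V,U\}$ and curvatures $k_g,k_n,\tau_g$, with $k_g(s)\neq 0$ for all $s\in I$. Let $c_1$ be a nonzero real constant, let $\psi$ be an antiderivative of $k_n\tau_g/k_g$ on $I$, and let $$\gamma(s)=\alpha(s)+c_1e^{-\psi(s)}\Big(\frac{\tau_g(s)}{k_g(s)}T(s)+U(s)\Big),$$ and assume $\gamma$ is regular. Then $\gamma$ is a general helix if and only if $\alpha$ is a helical curve on $M$.
   Context: $M$ is an oriented surface in Euclidean 3-space $E^3$ and $\alpha:I\to M$ is a unit-speed curve with arc-length parameter $s$. Its Darboux frame $\{T,V,U\}$ consists of the unit tangent $T=\alpha'$, the unit surface normal $U$ of $M$ along $\alpha$, and $V=U\times T$; it satisfies $T'=k_gV+k_nU$, $V'=-k_gT+\tau_gU$, $U'=-k_nT-\tau_gV$, where $k_g,k_n,\tau_g$ are the geodesic curvature, normal curvature and geodesic torsion. A regular curve is a general helix if its unit tangent makes a constant angle with a fixed direction. $\alpha$ is a helical curve on $M$ if $\langle T,d\rangle$ is constant for some fixed unit vector $d$. *)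

theory Defs
  imports "HOL-Analysis.Analysis" "HOL-Analysis.Cross3"
begin

text \<open>U is the unit surface normal along alpha, T = alpha', V = U x T.\<close>
definition darboux_frame ::
  "(real \<Rightarrow> real^3) \<Rightarrow> (real \<Rightarrow> real^3) \<Rightarrow> (real \<Rightarrow> real^3) \<Rightarrow> (real \<Rightarrow> real^3)
   \<Rightarrow> (real \<Rightarrow> real) \<Rightarrow> (real \<Rightarrow> real) \<Rightarrow> (real \<Rightarrow> real) \<Rightarrow> real set \<Rightarrow> bool" where
  "darboux_frame \<alpha> T V U kg kn tg I \<longleftrightarrow>
     (\<forall>s\<in>I.
        (\<alpha> has_vector_derivative T s) (at s) \<and>
        norm (T s) = 1 \<and> norm (U s) = 1 \<and> T s \<bullet> U s = 0 \<and>
        V s = cross3 (U s) (T s) \<and>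
        (T has_vector_derivative (kg s *\<^sub>R V s + kn s *\<^sub>R U s)) (at s) \<and>
        (V has_vector_derivative (- kg s *\<^sub>R T s + tg s *\<^sub>R U s)) (at s) \<and>
        (U has_vector_derivative (- kn s *\<^sub>R T s - tg s *\<^sub>R V s)) (at s))"

definition regular_curve :: "(real \<Rightarrow> real^3) \<Rightarrow> real set \<Rightarrow> bool" where
  "regular_curve \<gamma> I \<longleftrightarrow>
     (\<forall>s\<in>I. \<gamma> differentiable (at s) \<and> vector_derivative \<gamma> (at s) \<noteq> 0)"

definition general_helix :: "(real \<Rightarrow> real^3) \<Rightarrow> real set \<Rightarrow> bool" where
  "general_helix \<gamma> I \<longleftrightarrow>
     (\<exists>d::real^3. norm d = 1 \<and> (\<exists>c. \<forall>s\<in>I.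
        (vector_derivative \<gamma> (at s) /\<^sub>R norm (vector_derivative \<gamma> (at s))) \<bullet> d = c))"

definition helical_curve :: "(real \<Rightarrow> real^3) \<Rightarrow> real set \<Rightarrow> bool" where
  "helical_curve T I \<longleftrightarrow> (\<exists>d::real^3. norm d = 1 \<and> (\<exists>c. \<forall>s\<in>I. T s \<bullet> d = c))"

end

theory Submission
  imports Defs
begin


lemma darboux0:
  fixes G g :: "real \<Rightarrow> real"
  assumes ab: "a < b" and der: "\<forall>x\<in>{a..b}. (G has_real_derivative g x) (at x within {a..b})"
    and ga: "g a > 0" and gb: "g b < 0"
  shows "\<exists>x\<in>{a<..<b}. g x = 0"
proof -
  have "continuous_on {a..b} G"
    using der by (meson DERIV_continuous continuous_on_eq_continuous_within)
  then obtain m where m: "m \<in> {a..b}" and mx: "\<forall>y\<in>{a..b}. G y \<le> G m"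
    using continuous_attains_sup[of "{a..b}" G] ab by auto
  have "m \<noteq> a"
  proof
    assume "m = a"
    obtain d where d: "d > 0" "\<forall>h>0. a + h \<in> {a..b} \<longrightarrow> h < d \<longrightarrow> G a < G (a + h)"
      using has_real_derivative_pos_inc_right[OF der[rule_format, of a] ga] ab by auto
    let ?h = "min (d/2) (b - a)"
    have "G a < G (a + ?h)" using d ab by auto
    moreover have "G (a + ?h) \<le> G m" using mx ab d by auto
    ultimately show False using \<open>m = a\<close> by simp
  qed
  moreover have "m \<noteq> b"
  proof
    assume "m = b"
    obtain d where d: "d > 0" "\<forall>h>0. b - h \<in> {a..b} \<longrightarrow> h < d \<longrightarrow> G b < G (b - h)"
      using has_real_derivative_neg_dec_left[OF der[rule_format, of b] gb] ab by auto
    let ?h = "min (d/2) (b - a)"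
    have "G b < G (b - ?h)" using d ab by auto
    moreover have "G (b - ?h) \<le> G m" using mx ab d by auto
    ultimately show False using \<open>m = b\<close> by simp
  qed
  ultimately have mi: "m \<in> {a<..<b}" using m by auto
  have "(G has_real_derivative g m) (at m)"
    using der[rule_format, of m] mi at_within_Icc_at[of a m b] by auto
  moreover have "\<forall>y. \<bar>m - y\<bar> < min (m - a) (b - m) \<longrightarrow> G y \<le> G m"
    using mx by (auto simp: abs_if)
  ultimately have "g m = 0"
    using DERIV_local_max[where f=G and x=m and l="g m" and d="min (m - a) (b - m)"] mi by auto
  then show ?thesis using mi by blast
qed

lemma darboux_sign:
  fixes g :: "real \<Rightarrow> real"
  assumes I: "is_interval I" and nz: "\<forall>s\<in>I. g s \<noteq> 0"
    and ex: "\<And>a b. a \<in> I \<Longrightarrow> b \<in> I \<Longrightarrow> a < b \<Longrightarrow>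
              \<exists>G. \<forall>x\<in>{a..b}. (G has_real_derivative g x) (at x within {a..b})"
  shows "(\<forall>s\<in>I. g s > 0) \<or> (\<forall>s\<in>I. g s < 0)"
proof (rule ccontr)
  assume "\<not> ?thesis"
  then obtain a b where a: "a \<in> I" "\<not> g a < 0" and b: "b \<in> I" "\<not> g b > 0"
    by blast
  with nz have a: "a \<in> I" "g a > 0" and b: "b \<in> I" "g b < 0"
    by (metis linorder_neqE_linordered_idom)+
  have sub: "\<And>x. x \<in> {min a b..max a b} \<Longrightarrow> x \<in> I"
  proof -
    fix x assume x: "x \<in> {min a b..max a b}"
    show "x \<in> I"
    proof (cases "a \<le> b")
      case True thus ?thesis using mem_is_interval_1_I[OF I a(1) b(1)] x by auto
    next
      case False thus ?thesis using mem_is_interval_1_I[OF I b(1) a(1)] x by auto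
    qed
  qed
  have "a \<noteq> b" using a b by auto
  then consider "a < b" | "b < a" by linarith
  then show False
  proof cases
    case 1
    then obtain G where "\<forall>x\<in>{a..b}. (G has_real_derivative g x) (at x within {a..b})"
      using ex a b by blast
    then obtain x where "x \<in> {a<..<b}" "g x = 0" using darboux0 1 a b by blast
    then show False using sub nz 1 by auto
  next
    case 2
    then obtain G where G: "\<forall>x\<in>{b..a}. (G has_real_derivative g x) (at x within {b..a})"
      using ex a b by blast
    have "\<forall>x\<in>{b..a}. ((\<lambda>x. - G x) has_real_derivative - g x) (at x within {b..a})"
      using G by (auto intro: derivative_intros)
    then obtain x where "x \<in> {b<..<a}" "- g x = 0" using darboux0[of b a] 2 a b by force
    then show False using sub nz 2 by auto
  qed
qed

theorem theorem3p6:
  fixes \<alpha> T V U \<gamma> :: "real \<Rightarrow> real^3"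
    and kg kn tg \<psi> :: "real \<Rightarrow> real" and c1 :: real and I :: "real set"
  assumes "open I" and "is_interval I" and "I \<noteq> {}"
    and "darboux_frame \<alpha> T V U kg kn tg I"
    and "\<forall>s\<in>I. kg s \<noteq> 0"
    and "\<forall>s\<in>I. kg differentiable (at s) \<and> kn differentiable (at s) \<and> tg differentiable (at s)"
    and "c1 \<noteq> 0"
    and "\<forall>s\<in>I. (\<psi> has_real_derivative (kn s * tg s / kg s)) (at s)"
    and "\<forall>s\<in>I. \<gamma> s = \<alpha> s + (c1 * exp (- \<psi> s)) *\<^sub>R ((tg s / kg s) *\<^sub>R T s + U s)"
    and "regular_curve \<gamma> I"
  shows "general_helix \<gamma> I \<longleftrightarrow> helical_curve T I"
proof -
  note fr = assms(4)[unfolded darboux_frame_def]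
  define f where "f = (\<lambda>s. c1 * exp (- \<psi> s))"
  define h where "h = (\<lambda>s. tg s / kg s)"
  define f' where "f' = (\<lambda>s. - f s * (kn s * tg s / kg s))"
  have df: "(f has_real_derivative f' s) (at s)" if s: "s \<in> I" for s
  proof -
    have "((\<lambda>s. c1 * exp (- \<psi> s)) has_real_derivative c1 * (exp (- \<psi> s) * (- (kn s * tg s / kg s)))) (at s)"
      using assms(8) s by (auto intro!: derivative_eq_intros)
    then show ?thesis by (simp add: f_def f'_def algebra_simps)
  qed
  have "\<exists>D. (h has_real_derivative D) (at s)" if s: "s \<in> I" for s
  proof -
    obtain Dk where Dk: "(kg has_real_derivative Dk) (at s)"
      using assms(6) s real_differentiable_def by blast
    obtain Dt where Dt: "(tg has_real_derivative Dt) (at s)"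
      using assms(6) s real_differentiable_def by blast
    show ?thesis unfolding h_def using DERIV_divide[OF Dt Dk] assms(5) s by blast
  qed
  then obtain h' where dh: "\<And>s. s \<in> I \<Longrightarrow> (h has_real_derivative h' s) (at s)"
    by metis
  define lam where "lam = (\<lambda>s. 1 + f' s * h s + f s * h' s - f s * kn s)"
  have dg: "(\<gamma> has_vector_derivative lam s *\<^sub>R T s) (at s)" if s: "s \<in> I" for s
  proof -
    have d1: "((\<lambda>s. \<alpha> s + f s *\<^sub>R (h s *\<^sub>R T s + U s)) has_vector_derivative
       (T s + (f s *\<^sub>R ((h s *\<^sub>R (kg s *\<^sub>R V s + kn s *\<^sub>R U s) + h' s *\<^sub>R T s) + (- kn s *\<^sub>R T s - tg s *\<^sub>R V s))
         + f' s *\<^sub>R (h s *\<^sub>R T s + U s)))) (at s)"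
      using fr s
      by (intro has_vector_derivative_add has_vector_derivative_scaleR df dh) auto
    have hk: "h s * kg s = tg s" using assms(5) s by (simp add: h_def)
    have eq: "T s + (f s *\<^sub>R ((h s *\<^sub>R (kg s *\<^sub>R V s + kn s *\<^sub>R U s) + h' s *\<^sub>R T s) + (- kn s *\<^sub>R T s - tg s *\<^sub>R V s))
         + f' s *\<^sub>R (h s *\<^sub>R T s + U s)) = lam s *\<^sub>R T s"
      using assms(5) s
      by (simp add: vec_eq_iff lam_def f'_def h_def field_simps)
    show ?thesis
      apply (rule has_vector_derivative_transform_within_open[OF d1[unfolded eq] assms(1) s])
      using assms(9) by (simp add: f_def h_def)
  qed
  have vd: "vector_derivative \<gamma> (at s) = lam s *\<^sub>R T s" if "s \<in> I" for s
    using dg[OF that] by (rule vector_derivative_at)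
  have lnz: "\<forall>s\<in>I. lam s \<noteq> 0"
    using assms(10) vd unfolding regular_curve_def by auto
  have sign: "(\<forall>s\<in>I. lam s > 0) \<or> (\<forall>s\<in>I. lam s < 0)"
  proof (rule darboux_sign[OF assms(2) lnz])
    fix a b assume a: "a \<in> I" and b: "b \<in> I" and ab: "a < b"
    have sub: "x \<in> I" if "x \<in> {a..b}" for x
      using mem_is_interval_1_I[OF assms(2) a b] that by auto
    have cont: "continuous_on {a..b} (\<lambda>t. f t * kn t)"
    proof (rule continuous_at_imp_continuous_on, intro ballI)
      fix x assume "x \<in> {a..b}"
      then have x: "x \<in> I" by (rule sub)
      have "isCont f x" using df[OF x] by (rule DERIV_isCont)
      moreover have "isCont kn x" using assms(6) x differentiable_imp_continuous_within by blast
      ultimately show "isCont (\<lambda>t. f t * kn t) x" by (intro continuous_intros)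
    qed
    show "\<exists>G. \<forall>x\<in>{a..b}. (G has_real_derivative lam x) (at x within {a..b})"
    proof (intro exI ballI)
      fix x assume xab: "x \<in> {a..b}"
      then have x: "x \<in> I" by (rule sub)
      have d1: "((\<lambda>x. x) has_real_derivative 1) (at x within {a..b})"
        by (rule DERIV_ident)
      have d2: "((\<lambda>x. f x * h x) has_real_derivative (f' x * h x + h' x * f x)) (at x within {a..b})"
        using DERIV_mult[OF df[OF x] dh[OF x]] by (rule has_field_derivative_at_within)
      have d3: "((\<lambda>u. integral {a..u} (\<lambda>t. f t * kn t)) has_real_derivative (f x * kn x)) (at x within {a..b})"
        unfolding has_real_derivative_iff_has_vector_derivative
        by (rule integral_has_vector_derivative[OF cont xab])
      have eq: "1 + (f' x * h x + h' x * f x) - f x * kn x = lam x"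
        by (simp add: lam_def algebra_simps)
      show "((\<lambda>x. x + f x * h x - integral {a..x} (\<lambda>t. f t * kn t)) has_real_derivative lam x) (at x within {a..b})"
        using DERIV_diff[OF DERIV_add[OF d1 d2] d3] unfolding eq .
    qed
  qed
  obtain e :: real where e: "e = 1 \<or> e = -1"
    and ut: "\<forall>s\<in>I. vector_derivative \<gamma> (at s) /\<^sub>R norm (vector_derivative \<gamma> (at s)) = e *\<^sub>R T s"
  proof -
    have nT: "\<forall>s\<in>I. norm (T s) = 1" using fr by blast
    from sign show ?thesis
    proof
      assume p: "\<forall>s\<in>I. lam s > 0"
      show ?thesis by (rule that[of 1]) (use p nT vd in auto)
    next
      assume p: "\<forall>s\<in>I. lam s < 0"
      show ?thesis by (rule that[of "-1"]) (use p nT vd in auto)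
    qed
  qed
  show ?thesis
    unfolding general_helix_def helical_curve_def
  proof
    assume "\<exists>d. norm d = 1 \<and> (\<exists>c. \<forall>s\<in>I. (vector_derivative \<gamma> (at s) /\<^sub>R norm (vector_derivative \<gamma> (at s))) \<bullet> d = c)"
    then obtain d c where d: "norm d = 1" and c: "\<forall>s\<in>I. (e *\<^sub>R T s) \<bullet> d = c"
      using ut by auto
    have "\<forall>s\<in>I. T s \<bullet> d = e * c"
      using c e by auto
    then show "\<exists>d. norm d = 1 \<and> (\<exists>c. \<forall>s\<in>I. T s \<bullet> d = c)" using d by blast
  next
    assume "\<exists>d. norm d = 1 \<and> (\<exists>c. \<forall>s\<in>I. T s \<bullet> d = c)"
    then obtain d c where d: "norm d = 1" and c: "\<forall>s\<in>I. T s \<bullet> d = c" by auto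
    have "\<forall>s\<in>I. (vector_derivative \<gamma> (at s) /\<^sub>R norm (vector_derivative \<gamma> (at s))) \<bullet> d = e * c"
      using c ut by auto
    then show "\<exists>d. norm d = 1 \<and> (\<exists>c. \<forall>s\<in>I. (vector_derivative \<gamma> (at s) /\<^sub>R norm (vector_derivative \<gamma> (at s))) \<bullet> d = c)"
      using d by blast
  qed
qed

end
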